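(* For all integers $k\geq 2$ and $\ell\geq 2$, $$\lambda(k)\lambda(\ell)=\frac{1}{2^{\ell}}\sum_{i=0}^{k-1}2^{-i}\binom{\ell+i-1}{i}\sigma(\ell+i,k-i)+\frac{1}{2^{k}}\sum_{j=0}^{\ell-1}2^{-j}\binom{k+j-1}{j}\sigma(k+j,\ell-j).$$
   Context: For integers $t\geq 1$, $n\geq 1$ let $S_n^{(t)}=\sum_{k=1}^{n}\frac{1}{(2k-1)^t}$, and for integers $s\geq 2$, $t\geq 1$ let $\sigma(s,t)=\sum_{n\geq 1}\frac{S_n^{(t)}}{n^s}$. For real $s>1$, $\lambda(s)=\sum_{n\geq 1}\frac{1}{(2n-1)^s}$. *)

theory Defs
  imports "HOL-Analysis.Analysis"
begin

definition S_odd :: "nat \<Rightarrow> nat \<Rightarrow> real" where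
  "S_odd t n = (\<Sum>k=1..n. 1 / (2 * real k - 1) ^ t)"

definition sigma_odd :: "nat \<Rightarrow> nat \<Rightarrow> real" where
  "sigma_odd s t = (\<Sum>n. S_odd t (Suc n) / (real (Suc n)) ^ s)"

definition dlambda :: "real \<Rightarrow> real" where
  "dlambda s = (\<Sum>n. 1 / (2 * real (Suc n) - 1) powr s)"

end

theory Submission imports Defs begin

definition Bs :: "nat \<Rightarrow> nat \<Rightarrow> real \<Rightarrow> real" where
  "Bs k l v = (\<Sum>j<l. real ((k + j - 1) choose j) * v ^ j)"

lemma choose_sym_plus: "(a + b) choose a = (a + b) choose (b::nat)"
  using binomial_symmetric[of a "a+b"] by simp

lemma Bs_rec:
  assumes "u = 1 - v"
  shows "u * Bs (Suc k) (Suc m) v = Bs k (Suc m) v - real ((k + m) choose k) * v ^ Suc m"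
proof (induction m)
  case 0
  then show ?case using assms by (simp add: Bs_def)
next
  case (Suc m)
  have e1: "Bs (Suc k) (Suc (Suc m)) v = Bs (Suc k) (Suc m) v + real ((k + Suc m) choose (Suc m)) * v ^ Suc m"
    by (simp add: Bs_def)
  have e2: "Bs k (Suc (Suc m)) v = Bs k (Suc m) v + real ((k + m) choose (Suc m)) * v ^ Suc m"
    by (simp add: Bs_def)
  have c1: "(k + Suc m) choose (Suc m) = (k + Suc m) choose k"
    by (metis add.commute choose_sym_plus)
  have c2: "(k + Suc m) choose (Suc m) = ((k+m) choose (Suc m)) + ((k+m) choose m)"
    by simp
  have c3: "(k+m) choose m = (k+m) choose k"
    by (metis add.commute choose_sym_plus)
  have r: "real ((k + Suc m) choose (Suc m)) = real ((k+m) choose k) + real ((k+m) choose (Suc m))"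
    using c2 c3 by simp
  have r1: "real ((k + Suc m) choose k) = real ((k+m) choose k) + real ((k+m) choose (Suc m))"
    using r c1 by simp
  have r2: "real (Suc (k+m) choose k) = real ((k+m) choose k) + real ((k+m) choose (Suc m))"
    using r1 by simp
  show ?case
    by (simp only: e1 e2 distrib_left Suc.IH) (simp add: assms r r1 r2 c3 algebra_simps)
qed

lemma Bs0: "Bs 0 (Suc m) v = 1"
  unfolding Bs_def sum.lessThan_Suc_shift by (simp add: binomial_eq_0)

lemma T_ident:
  assumes "u + v = 1" "l \<ge> 1"
  shows "v ^ l * Bs l k u + u ^ k * Bs k l v = 1"
proof (induction k)
  case 0
  obtain m where "l = Suc m" using assms by (cases l) auto
  have "Bs l 0 u = 0" by (simp add: Bs_def)
  then show ?case using \<open>l = Suc m\<close> by (simp add: Bs0)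
next
  case (Suc k)
  obtain m where l: "l = Suc m" using assms by (cases l) auto
  have r: "u * Bs (Suc k) l v = Bs k l v - real ((k + m) choose k) * v ^ l"
    unfolding l by (rule Bs_rec) (use assms in auto)
  have a: "Bs l (Suc k) u = Bs l k u + real ((l + k - 1) choose k) * u ^ k"
    by (simp add: Bs_def)
  have c: "l + k - 1 = k + m" using l by simp
  have "v ^ l * Bs l (Suc k) u + u ^ Suc k * Bs (Suc k) l v
      = v ^ l * Bs l k u + real ((k + m) choose k) * u ^ k * v^l + u^k * (u * Bs (Suc k) l v)"
    unfolding a c by (simp add: algebra_simps)
  also have "\<dots> = v ^ l * Bs l k u + u ^ k * Bs k l v"
    unfolding r by (simp add: algebra_simps)
  finally show ?case using Suc.IH by simp
qed


lemma term_lem: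
  fixes a b C :: real
  assumes "a > 0" "b > 0" "i < k"
  shows "(b/(a+b))^l * (C * (a/(a+b))^i) / (a^k * b^l) = C / (a^(k-i) * (a+b)^(l+i))"
proof -
  obtain d where k: "k = i + d" using assms(3) by (metis less_imp_add_positive)
  have "a + b > 0" using assms by simp
  then show ?thesis using assms unfolding k
    by (simp add: power_add power_divide field_simps)
qed

lemma pf:
  fixes a b :: real
  assumes "a > 0" "b > 0" "k \<ge> 1" "l \<ge> 1"
  shows "1 / (a^k * b^l) =
     (\<Sum>i<k. real ((l + i - 1) choose i) / (a^(k-i) * (a+b)^(l+i)))
   + (\<Sum>j<l. real ((k + j - 1) choose j) / (b^(l-j) * (a+b)^(k+j)))"
proof -
  define u where "u = a/(a+b)"
  define v where "v = b/(a+b)"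
  have "u + v = 1" unfolding u_def v_def add_divide_distrib[symmetric] using assms by simp
  then have T: "v ^ l * Bs l k u + u ^ k * Bs k l v = 1"
    using T_ident assms by blast
  have "1 / (a^k * b^l) = (v ^ l * Bs l k u + u ^ k * Bs k l v) / (a^k * b^l)"
    by (simp add: T)
  also have "\<dots> = (\<Sum>i<k. v^l * (real ((l + i - 1) choose i) * u^i) / (a^k * b^l))
      + (\<Sum>j<l. u^k * (real ((k + j - 1) choose j) * v^j) / (a^k * b^l))"
    unfolding Bs_def add_divide_distrib sum_distrib_left sum_divide_distrib by simp
  also have "\<dots> = (\<Sum>i<k. real ((l + i - 1) choose i) / (a^(k-i) * (a+b)^(l+i)))
   + (\<Sum>j<l. real ((k + j - 1) choose j) / (b^(l-j) * (a+b)^(k+j)))"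
  proof (intro arg_cong2[where f="(+)"] sum.cong refl)
    fix i assume "i \<in> {..<k}"
    then show "v^l * (real ((l + i - 1) choose i) * u^i) / (a^k * b^l)
      = real ((l + i - 1) choose i) / (a^(k-i) * (a+b)^(l+i))"
      unfolding u_def v_def using term_lem[of a b i k l] assms by simp
  next
    fix j assume "j \<in> {..<l}"
    then show "u^k * (real ((k + j - 1) choose j) * v^j) / (a^k * b^l)
      = real ((k + j - 1) choose j) / (b^(l-j) * (a+b)^(k+j))"
      using term_lem[of b a j l k "real ((k + j - 1) choose j)"] assms \<open>j \<in> {..<l}\<close>
      unfolding u_def v_def add.commute[of b a] mult.commute[of "b^l" "a^k"] by simp
  qed
  finally show ?thesis .
qed

definition gfun :: "nat \<Rightarrow> nat \<Rightarrow> nat \<times> nat \<Rightarrow> real" where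
  "gfun s t = (\<lambda>(m,n). 1 / ((2 * real m + 1) ^ t * (2 * real m + 2 * real n + 2) ^ s))"

lemma g_has_sum:
  assumes "gfun s t summable_on UNIV"
  shows "(gfun s t has_sum sigma_odd s t / 2^s) UNIV"
proof -
  define S where "S = infsum (gfun s t) UNIV"
  have g: "(gfun s t has_sum S) UNIV" using assms S_def by simp
  define h where "h = (\<lambda>(N::nat, j::nat). 1 / ((2 * real j + 1) ^ t * (2 * real N + 2) ^ s))"
  define D where "D = Sigma (UNIV::nat set) (\<lambda>N. {..N})"
  have "(gfun s t has_sum S) UNIV = (h has_sum S) D"
    by (rule has_sum_reindex_bij_witness[where j="\<lambda>(m,n). (m+n,m)" and i="\<lambda>(N,j). (j,N-j)"])
       (auto simp: D_def h_def gfun_def algebra_simps)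
  with g have hD: "(h has_sum S) (Sigma UNIV (\<lambda>N. {..N}))" unfolding D_def by simp
  have inner: "\<And>N. N \<in> UNIV \<Longrightarrow> ((\<lambda>j. h (N,j)) has_sum (\<Sum>j\<le>N. h(N,j))) {..N}"
    by (rule has_sum_finiteI) auto
  have "((\<lambda>N. \<Sum>j\<le>N. h(N,j)) has_sum S) UNIV" by (rule has_sum_SigmaD[OF hD inner])
  hence sums: "(\<lambda>N. \<Sum>j\<le>N. h(N,j)) sums S" by (rule has_sum_imp_sums)
  have eq: "S_odd t (Suc N) / real (Suc N)^s = 2^s * (\<Sum>j\<le>N. h(N,j))" for N
  proof -
    have "S_odd t (Suc N) = (\<Sum>j=0..N. 1/(2*real (Suc j) - 1)^t)"
      unfolding S_odd_def using sum.shift_bounds_cl_Suc_ivl[of "\<lambda>k. 1/(2*real k - 1)^t" 0 N] by simp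
    also have "\<dots> = (\<Sum>j\<le>N. 1/(2*real j + 1)^t)"
      by (simp add: atLeast0AtMost algebra_simps)
    finally have s1: "S_odd t (Suc N) = (\<Sum>j\<le>N. 1/(2*real j + 1)^t)" .
    have pw: "(2 * real N + 2) ^ s = 2^s * real (Suc N)^s"
      by (simp add: power_mult_distrib[symmetric] algebra_simps)
    have "(\<Sum>j\<le>N. h(N,j)) = (\<Sum>j\<le>N. 1/(2*real j + 1)^t) / (2^s * real (Suc N)^s)"
      unfolding h_def sum_divide_distrib by (intro sum.cong refl) (simp add: pw)
    then show ?thesis unfolding s1 by simp
  qed
  have "(\<lambda>N. 2^s * (\<Sum>j\<le>N. h(N,j))) sums (2^s * S)" by (rule sums_mult[OF sums])
  hence "sigma_odd s t = 2^s * S" unfolding sigma_odd_def eq by (rule sums_unique[symmetric])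
  thus ?thesis using g by simp
qed


lemma has_sum_sum_fin:
  fixes f :: "'i \<Rightarrow> 'a \<Rightarrow> real"
  assumes "finite I" "\<And>i. i \<in> I \<Longrightarrow> (f i has_sum s i) A"
  shows "((\<lambda>x. \<Sum>i\<in>I. f i x) has_sum (\<Sum>i\<in>I. s i)) A"
  using assms
proof (induction I rule: finite_induct)
  case empty then show ?case by simp
next
  case (insert x F)
  then show ?case by (simp add: has_sum_add)
qed

lemma odd_summable:
  assumes "p \<ge> 2"
  shows "summable (\<lambda>n. 1/(2*real n+1)^p)"
proof -
  have "summable (\<lambda>n. inverse (real n ^ p))"
    by (rule inverse_power_summable[OF assms])
  then have "summable (\<lambda>n. inverse (real (Suc n) ^ p))"
    by (subst summable_Suc_iff)
  then show ?thesis
  proof (rule summable_comparison_test'[where N=0])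
    fix n :: nat
    have "real (Suc n) ^ p \<le> (2*real n+1)^p" by (intro power_mono) auto
    then show "norm (1/(2*real n+1)^p) \<le> inverse (real (Suc n) ^ p)"
      by (simp add: divide_simps)
  qed
qed

lemma dlambda_eq: "dlambda (real p) = (\<Sum>n. 1/(2*real n+1)^p)"
proof -
  have "\<And>n. 1/(2*real(Suc n)-1) powr real p = 1/(2*real n+1)^p"
    by (subst powr_realpow) (auto simp: algebra_simps)
  then show ?thesis unfolding dlambda_def by simp
qed

lemma odd_has_sum:
  assumes "p \<ge> 2"
  shows "((\<lambda>n. 1/(2*real n+1)^p) has_sum dlambda (real p)) UNIV"
  unfolding dlambda_eq
  by (rule sums_nonneg_imp_has_sum[OF summable_sums[OF odd_summable[OF assms]]]) simp

theorem mainTheorem14: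
  fixes k l :: nat
  assumes "k \<ge> 2" and "l \<ge> 2"
  shows "dlambda (real k) * dlambda (real l) =
    1 / 2 ^ l * (\<Sum>i=0..k-1. (1/2) ^ i * real ((l + i - 1) choose i) * sigma_odd (l + i) (k - i))
  + 1 / 2 ^ k * (\<Sum>j=0..l-1. (1/2) ^ j * real ((k + j - 1) choose j) * sigma_odd (k + j) (l - j))"
proof -
  define a where "a = (\<lambda>n::nat. 1/(2*real n+1)^k)"
  define b where "b = (\<lambda>n::nat. 1/(2*real n+1)^l)"
  define La where "La = dlambda (real k)"
  define Lb where "Lb = dlambda (real l)"
  have ha: "(a has_sum La) UNIV" unfolding a_def La_def using odd_has_sum assms by blast
  have hb: "(b has_sum Lb) UNIV" unfolding b_def Lb_def using odd_has_sum assms by blast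
  define F where "F = (\<lambda>(m,n). a m * b n)"
  have a0: "a m \<ge> 0" for m unfolding a_def by simp
  have b0: "b m \<ge> 0" for m unfolding b_def by simp
  have inner: "\<And>m. m \<in> UNIV \<Longrightarrow> ((\<lambda>n. F (m,n)) has_sum (a m * Lb)) UNIV"
    unfolding F_def using has_sum_cmult_right[OF hb] by simp
  have outer: "((\<lambda>m. a m * Lb) has_sum (La * Lb)) UNIV"
    by (rule has_sum_cmult_left[OF ha])
  have Fsum: "F summable_on (UNIV \<times> UNIV)"
    by (rule summable_on_SigmaI[OF inner has_sum_imp_summable[OF outer]])
       (auto simp: F_def a0 b0)
  have hF: "(F has_sum (La * Lb)) UNIV"
    using has_sum_SigmaI[OF inner outer Fsum] by simp
  have F0: "F p \<ge> 0" for p unfolding F_def using a0 b0 by (auto simp: case_prod_beta)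
  define G where "G = (\<lambda>i p. real ((l + i - 1) choose i) * gfun (l + i) (k - i) p)"
  define H where "H = (\<lambda>j (m::nat, n::nat). real ((k + j - 1) choose j) * gfun (k + j) (l - j) (n, m))"
  have G0: "G i p \<ge> 0" for i p unfolding G_def gfun_def by (auto simp: case_prod_beta)
  have H0: "H j p \<ge> 0" for j p unfolding H_def gfun_def by (auto simp: case_prod_beta)
  have decomp: "F p = (\<Sum>i<k. G i p) + (\<Sum>j<l. H j p)" for p
  proof -
    obtain m n where p: "p = (m,n)" by (cases p)
    have e1: "(2 * real m + 1) + (2 * real n + 1) = 2 * real m + 2 * real n + 2" by simp
    have e2: "2 * real n + 2 * real m + 2 = 2 * real m + 2 * real n + (2::real)" by simp
    have "F p = 1 / ((2 * real m + 1)^k * (2 * real n + 1)^l)"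
      unfolding F_def a_def b_def p by simp
    also have "\<dots> = (\<Sum>i<k. real ((l + i - 1) choose i) / ((2 * real m + 1)^(k-i) * ((2 * real m + 1) + (2 * real n + 1))^(l+i)))
     + (\<Sum>j<l. real ((k + j - 1) choose j) / ((2 * real n + 1)^(l-j) * ((2 * real m + 1) + (2 * real n + 1))^(k+j)))"
      by (rule pf) (use assms in auto)
    also have "\<dots> = (\<Sum>i<k. G i p) + (\<Sum>j<l. H j p)"
      unfolding p G_def H_def gfun_def
      by (intro arg_cong2[where f="(+)"] sum.cong refl) (simp_all only: e1 case_prod_conv, simp_all add: e2)
    finally show ?thesis .
  qed
  have GleF: "G i p \<le> F p" if "i < k" for i p
  proof -
    have "G i p \<le> (\<Sum>i<k. G i p)" by (rule member_le_sum) (use that G0 in auto)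
    also have "\<dots> \<le> F p" unfolding decomp using H0 by (simp add: sum_nonneg)
    finally show ?thesis .
  qed
  have HleF: "H j p \<le> F p" if "j < l" for j p
  proof -
    have "H j p \<le> (\<Sum>j<l. H j p)" by (rule member_le_sum) (use that H0 in auto)
    also have "\<dots> \<le> F p" unfolding decomp using G0 by (simp add: sum_nonneg)
    finally show ?thesis .
  qed
  have Fs: "F summable_on UNIV" using hF has_sum_imp_summable by blast
  have hG: "(G i has_sum real ((l + i - 1) choose i) * (sigma_odd (l + i) (k - i) / 2^(l+i))) UNIV"
    if "i < k" for i
  proof -
    have c: "real ((l + i - 1) choose i) \<ge> 1"
      using assms by (simp add: Suc_leI)
    have "gfun (l + i) (k - i) summable_on UNIV"
    proof (rule summable_on_comparison_test[OF Fs])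
      fix p
      have "gfun (l + i) (k - i) p \<le> G i p"
        unfolding G_def using c mult_right_mono[OF c, of "gfun (l + i) (k - i) p"]
        by (simp add: gfun_def case_prod_beta)
      then show "gfun (l + i) (k - i) p \<le> F p" using GleF[OF that, of p] by linarith
      show "0 \<le> gfun (l + i) (k - i) p" by (simp add: gfun_def case_prod_beta)
    qed
    then show ?thesis unfolding G_def by (intro has_sum_cmult_right g_has_sum)
  qed
  have hH: "(H j has_sum real ((k + j - 1) choose j) * (sigma_odd (k + j) (l - j) / 2^(k+j))) UNIV"
    if "j < l" for j
  proof -
    have c: "real ((k + j - 1) choose j) \<ge> 1"
      using assms by (simp add: Suc_leI)
    define g' where "g' = (\<lambda>(m::nat, n::nat). gfun (k + j) (l - j) (n, m))"
    have "g' summable_on UNIV"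
    proof (rule summable_on_comparison_test[OF Fs])
      fix p
      have "g' p \<le> H j p"
        unfolding H_def g'_def using c mult_right_mono[OF c, of "gfun (k + j) (l - j) (snd p, fst p)"]
        by (simp add: gfun_def case_prod_beta)
      then show "g' p \<le> F p" using HleF[OF that, of p] by linarith
      show "0 \<le> g' p" by (simp add: g'_def gfun_def case_prod_beta)
    qed
    then have "gfun (k + j) (l - j) summable_on UNIV"
      using summable_on_swap[of "gfun (k + j) (l - j)" UNIV UNIV] unfolding g'_def by simp
    then have "(gfun (k + j) (l - j) has_sum sigma_odd (k + j) (l - j) / 2^(k+j)) UNIV"
      by (rule g_has_sum)
    then have "(g' has_sum sigma_odd (k + j) (l - j) / 2^(k+j)) UNIV"
      using has_sum_swap[where f="gfun (k + j) (l - j)" and A=UNIV and B=UNIV] unfolding g'_def by simp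
    then have "((\<lambda>p. real ((k + j - 1) choose j) * g' p) has_sum
        real ((k + j - 1) choose j) * (sigma_odd (k + j) (l - j) / 2^(k+j))) UNIV"
      by (rule has_sum_cmult_right)
    moreover have "(\<lambda>p. real ((k + j - 1) choose j) * g' p) = H j"
      unfolding H_def g'_def by (auto simp: case_prod_beta)
    ultimately show ?thesis by simp
  qed
  have tot: "((\<lambda>p. (\<Sum>i<k. G i p) + (\<Sum>j<l. H j p)) has_sum
     ((\<Sum>i<k. real ((l + i - 1) choose i) * (sigma_odd (l + i) (k - i) / 2^(l+i)))
    + (\<Sum>j<l. real ((k + j - 1) choose j) * (sigma_odd (k + j) (l - j) / 2^(k+j))))) UNIV"
    by (intro has_sum_add has_sum_sum_fin finite_lessThan) (auto simp only: lessThan_iff intro: hG hH)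
  have "F = (\<lambda>p. (\<Sum>i<k. G i p) + (\<Sum>j<l. H j p))" using decomp by auto
  with tot hF have main: "La * Lb = (\<Sum>i<k. real ((l + i - 1) choose i) * (sigma_odd (l + i) (k - i) / 2^(l+i)))
    + (\<Sum>j<l. real ((k + j - 1) choose j) * (sigma_odd (k + j) (l - j) / 2^(k+j)))"
    using has_sum_unique by blast
  have r1: "{0..k-1} = {..<k}" "{0..l-1} = {..<l}" using assms by auto
  have s1: "1 / 2 ^ l * (\<Sum>i=0..k-1. (1/2) ^ i * real ((l + i - 1) choose i) * sigma_odd (l + i) (k - i))
     = (\<Sum>i<k. real ((l + i - 1) choose i) * (sigma_odd (l + i) (k - i) / 2^(l+i)))"
    unfolding r1 sum_distrib_left by (intro sum.cong refl) (simp add: power_add power_divide field_simps)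
  have s2: "1 / 2 ^ k * (\<Sum>j=0..l-1. (1/2) ^ j * real ((k + j - 1) choose j) * sigma_odd (k + j) (l - j))
     = (\<Sum>j<l. real ((k + j - 1) choose j) * (sigma_odd (k + j) (l - j) / 2^(k+j)))"
    unfolding r1 sum_distrib_left by (intro sum.cong refl) (simp add: power_add power_divide field_simps)
  show ?thesis unfolding s1 s2 using main La_def Lb_def by simp
qed

end
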